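(* Let $(\tilde{\mathscr M},\tilde g_{ab})$ be the unphysical (conformally completed) spacetime of an asymptotically flat spacetime, with conformal factor $\Omega$, and let $\mathscr I^+$ be future null infinity, a null hypersurface with null normal $\tilde n_a=\tilde\nabla_a\Omega|_{\mathscr I^+}$, on which the expansion $\theta=\tilde m^a\bar{\tilde m}^b\tilde\nabla_a\tilde n_b$ and shear $\sigma=\tilde m^a\tilde m^b\tilde\nabla_a\tilde n_b$ vanish. Let $e^a_I$ ($I=0,1,2,3$) be an orthonormal tetrad of $\tilde g_{ab}$ satisfying the gauge fixing that $e_1^a$ is normal to the spacelike cross-sections of $\mathscr I^+$ while $e_2^a,e_3^a$ are tangent to them, with Newman–Penrose frame $\tilde n^a=\tfrac12(e_0^a+e_1^a)$, $\tilde l^a=\tfrac12(e_0^a-e_1^a)$, $\tilde m^a=\tfrac12(e_2^a+ie_3^a)$ on $\mathscr I^+$. Let $\omega_a^{\ IJ}=e^{Ib}\tilde\nabla_a e_b^{\ J}$. Then the pullbacks of these connection one-forms to $\mathscr I^+$ satisfy $$\underset{\Leftarrow}{\omega}^{21}=\underset{\Leftarrow}{\omega}^{20},\qquad \underset{\Leftarrow}{\omega}^{31}=\underset{\Leftarrow}{\omega}^{30}.$$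
   Context: $\tilde\nabla$ is the Levi-Civita connection of $\tilde g_{ab}=\Omega^2 g_{ab}$, where $g_{ab}$ is the physical metric; $\Omega$ vanishes on $\mathscr I^+$ with nonvanishing gradient there. Internal indices are raised and lowered with $\eta_{IJ}=\mathrm{diag}(-1,1,1,1)$, and $\tilde g_{ab}=e_a^{\ I}e_b^{\ J}\eta_{IJ}$ with $e_a^{\ I}$ the co-tetrad inverse to $e^a_I$. The symbol $\underset{\Leftarrow}{\cdot}$ denotes pullback to $\mathscr I^+$. *)

theory Defs
  imports "HOL-Analysis.Analysis"
begin

text \<open>Local coordinate model of the unphysical spacetime near future null infinity:
  points are coordinates in an open set U of real^4; abstract (spacetime) indices
  a,b,c,d and internal (tetrad) indices I,J range over the finite type 4
  with elements 0,1,2,3.\<close>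

type_synonym pt = "real^4"

definition pd :: "4 \<Rightarrow> (pt \<Rightarrow> real) \<Rightarrow> pt \<Rightarrow> real" where
  "pd a f x = frechet_derivative f (at x) (axis a 1)"

definition smooth_on :: "pt set \<Rightarrow> (pt \<Rightarrow> real) \<Rightarrow> bool" where
  "smooth_on U f \<longleftrightarrow> (\<forall>ds::4 list. \<forall>x\<in>U. (fold pd ds f) differentiable (at x))"

definition eta :: "4 \<Rightarrow> 4 \<Rightarrow> real" where
  "eta I J = (if I = J then (if I = 0 then -1 else 1) else 0)"

text \<open>Inverse metric components g^{ab}, for a metric G x $ a $ b = g_{ab}(x).\<close>
definition ginv :: "(pt \<Rightarrow> real^4^4) \<Rightarrow> pt \<Rightarrow> 4 \<Rightarrow> 4 \<Rightarrow> real" where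
  "ginv G x a b = matrix_inv (G x) $ a $ b"

definition christoffel :: "(pt \<Rightarrow> real^4^4) \<Rightarrow> pt \<Rightarrow> 4 \<Rightarrow> 4 \<Rightarrow> 4 \<Rightarrow> real" where
  "christoffel G x c a b = (1/2) * (\<Sum>d\<in>UNIV. ginv G x c d *
      (pd a (\<lambda>y. G y $ d $ b) x + pd b (\<lambda>y. G y $ d $ a) x - pd d (\<lambda>y. G y $ a $ b) x))"

definition cov_deriv :: "(pt \<Rightarrow> real^4^4) \<Rightarrow> (pt \<Rightarrow> 4 \<Rightarrow> real) \<Rightarrow> pt \<Rightarrow> 4 \<Rightarrow> 4 \<Rightarrow> real" where
  "cov_deriv G w x a b = pd a (\<lambda>y. w y b) x - (\<Sum>c\<in>UNIV. christoffel G x c a b * w x c)"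

text \<open>Tetrad: e I x $ a = e^a_I(x).  Co-tetrad e_a^I as the inverse matrix:
  cotetrad e x I a = e_a^I(x).\<close>
definition tetrad_matrix :: "(4 \<Rightarrow> pt \<Rightarrow> real^4) \<Rightarrow> pt \<Rightarrow> real^4^4" where
  "tetrad_matrix e x = (\<chi> a I. e I x $ a)"

definition cotetrad :: "(4 \<Rightarrow> pt \<Rightarrow> real^4) \<Rightarrow> pt \<Rightarrow> 4 \<Rightarrow> 4 \<Rightarrow> real" where
  "cotetrad e x I a = matrix_inv (tetrad_matrix e x) $ I $ a"

definition orthonormal_tetrad :: "(pt \<Rightarrow> real^4^4) \<Rightarrow> (4 \<Rightarrow> pt \<Rightarrow> real^4) \<Rightarrow> pt \<Rightarrow> bool" where
  "orthonormal_tetrad G e x \<longleftrightarrow>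
     (\<forall>I J. (\<Sum>a\<in>UNIV. \<Sum>b\<in>UNIV. G x $ a $ b * e I x $ a * e J x $ b) = eta I J)"

text \<open>Connection one-forms omega_a^{IJ} = e^{Ib} nabla_a e_b^J, with
  e^{Ib} = eta^{IK} e^b_K (eta is its own inverse).\<close>
definition conn_form :: "(pt \<Rightarrow> real^4^4) \<Rightarrow> (4 \<Rightarrow> pt \<Rightarrow> real^4) \<Rightarrow> pt \<Rightarrow> 4 \<Rightarrow> 4 \<Rightarrow> 4 \<Rightarrow> real" where
  "conn_form G e x a I J = (\<Sum>b\<in>UNIV. (\<Sum>K\<in>UNIV. eta I K * e K x $ b) *
      cov_deriv G (\<lambda>y c. cotetrad e y J c) x a b)"

definition grad :: "(pt \<Rightarrow> real) \<Rightarrow> pt \<Rightarrow> 4 \<Rightarrow> real" where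
  "grad f x a = pd a f x"

definition nvec :: "(pt \<Rightarrow> real^4^4) \<Rightarrow> (pt \<Rightarrow> real) \<Rightarrow> pt \<Rightarrow> 4 \<Rightarrow> real" where
  "nvec G \<Omega> x a = (\<Sum>b\<in>UNIV. ginv G x a b * pd b \<Omega> x)"

definition mvec :: "(4 \<Rightarrow> pt \<Rightarrow> real^4) \<Rightarrow> pt \<Rightarrow> 4 \<Rightarrow> complex" where
  "mvec e x a = (complex_of_real (e 2 x $ a) + \<i> * complex_of_real (e 3 x $ a)) / 2"

definition expansion :: "(pt \<Rightarrow> real^4^4) \<Rightarrow> (4 \<Rightarrow> pt \<Rightarrow> real^4) \<Rightarrow> (pt \<Rightarrow> real) \<Rightarrow> pt \<Rightarrow> complex" where
  "expansion G e \<Omega> x = (\<Sum>a\<in>UNIV. \<Sum>b\<in>UNIV. mvec e x a * cnj (mvec e x b) *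
       complex_of_real (cov_deriv G (grad \<Omega>) x a b))"

definition shear :: "(pt \<Rightarrow> real^4^4) \<Rightarrow> (4 \<Rightarrow> pt \<Rightarrow> real^4) \<Rightarrow> (pt \<Rightarrow> real) \<Rightarrow> pt \<Rightarrow> complex" where
  "shear G e \<Omega> x = (\<Sum>a\<in>UNIV. \<Sum>b\<in>UNIV. mvec e x a * mvec e x b *
       complex_of_real (cov_deriv G (grad \<Omega>) x a b))"

definition tangent_scri :: "(pt \<Rightarrow> real) \<Rightarrow> pt \<Rightarrow> real^4 \<Rightarrow> bool" where
  "tangent_scri \<Omega> x X \<longleftrightarrow> (\<Sum>a\<in>UNIV. X $ a * pd a \<Omega> x) = 0"

text \<open>Pullback of a one-form w_a to scri at x, evaluated on a tangent vector X.\<close>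
definition pullback_eq :: "(pt \<Rightarrow> real) \<Rightarrow> pt \<Rightarrow> (4 \<Rightarrow> real) \<Rightarrow> (4 \<Rightarrow> real) \<Rightarrow> bool" where
  "pullback_eq \<Omega> x w1 w2 \<longleftrightarrow>
     (\<forall>X. tangent_scri \<Omega> x X \<longrightarrow> (\<Sum>a\<in>UNIV. X $ a * w1 a) = (\<Sum>a\<in>UNIV. X $ a * w2 a))"

end

theory Submission
  imports Defs
begin


lemma four_distinct[simp]: "(0::4) \<noteq> 1" "(0::4) \<noteq> 2" "(0::4) \<noteq> 3" "(1::4) \<noteq> 2" "(1::4) \<noteq> 3" "(2::4) \<noteq> 3"
  "(1::4) \<noteq> 0" "(2::4) \<noteq> 0" "(3::4) \<noteq> 0" "(2::4) \<noteq> 1" "(3::4) \<noteq> 1" "(3::4) \<noteq> 2"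
  by simp_all

lemma sum4: "(\<Sum>i\<in>(UNIV::4 set). f i) = f 0 + f 1 + f 2 + f 3"
proof -
  have "(4::4) = 0" by simp
  then have U: "(UNIV::4 set) = {0,1,2,3}" using UNIV_4 by auto
  show ?thesis unfolding U by (simp add: ac_simps)
qed

lemma sum_axis1[simp]: "(\<Sum>i\<in>UNIV. axis a (1::real) $ i * F i) = F a"
proof -
  have "(\<Sum>i\<in>UNIV. axis a (1::real) $ i * F i) = (\<Sum>i\<in>UNIV. if i = a then F i else 0)"
    by (rule sum.cong) (auto simp: axis_def)
  then show ?thesis by simp
qed
lemma sum_axis2[simp]: "(\<Sum>i\<in>UNIV. F i * axis a (1::real) $ i) = F a"
  by (simp add: axis_def if_distrib sum.delta cong: if_cong)

lemma sum_delta1: "(\<Sum>f\<in>UNIV. (if (d::4) = f then 1 else 0) * F f) = (F d :: real)"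
proof -
  have "(\<Sum>f\<in>UNIV. (if d = f then 1 else 0) * F f) = (\<Sum>f\<in>UNIV. if f = d then F f else 0)"
    by (rule sum.cong) auto
  then show ?thesis by simp
qed

lemma pd_has_derivative:
  assumes "f differentiable (at x)"
  shows "(f has_derivative (\<lambda>h. \<Sum>a\<in>UNIV. h $ a * pd a f x)) (at x)"
proof -
  let ?D = "frechet_derivative f (at x)"
  have d: "(f has_derivative ?D) (at x)" using assms frechet_derivative_works by blast
  have lin: "linear ?D" using assms linear_frechet_derivative by blast
  have "?D h = (\<Sum>a\<in>UNIV. h $ a * pd a f x)" for h
  proof -
    have "h = (\<Sum>a\<in>UNIV. h $ a *\<^sub>R axis a 1)"
      by (simp add: vec_eq_iff axis_def sum.delta if_distrib cong: if_cong)
    then have "?D h = ?D (\<Sum>a\<in>UNIV. h $ a *\<^sub>R axis a 1)" by simp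
    also have "\<dots> = (\<Sum>a\<in>UNIV. h $ a *\<^sub>R ?D (axis a 1))"
      using lin by (simp add: linear_sum linear_scale)
    finally show ?thesis by (simp add: pd_def)
  qed
  then show ?thesis using d by (metis (no_types, lifting) ext)
qed

lemma pd_at: "(f has_derivative D) (at x) \<Longrightarrow> pd a f x = D (axis a 1)"
  by (simp add: pd_def frechet_derivative_at[symmetric])

lemma dir_deriv:
  assumes "(f has_derivative D) (at x)"
  shows "(\<Sum>a\<in>UNIV. X $ a * pd a f x) = D X"
proof -
  have "f differentiable (at x)" using assms differentiable_def by blast
  from pd_has_derivative[OF this] have "(f has_derivative (\<lambda>h. \<Sum>a\<in>UNIV. h $ a * pd a f x)) (at x)" .
  with assms have "D = (\<lambda>h. \<Sum>a\<in>UNIV. h $ a * pd a f x)"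
    using has_derivative_unique by blast
  then show ?thesis by simp
qed

lemma pd_local:
  assumes "open S" "x \<in> S" "\<And>y. y \<in> S \<Longrightarrow> f y = g y"
  shows "pd a f x = pd a g x"
proof -
  have "(f has_derivative D) (at x) \<longleftrightarrow> (g has_derivative D) (at x)" for D
    using has_derivative_transform_within_open[of f D x UNIV S g]
      has_derivative_transform_within_open[of g D x UNIV S f] assms by metis
  then show ?thesis unfolding pd_def frechet_derivative_def by simp
qed

lemma diff_local:
  assumes "open S" "x \<in> S" "\<And>y. y \<in> S \<Longrightarrow> f y = g y" "g differentiable (at x)"
  shows "f differentiable (at x)"
  using assms has_derivative_transform_within_open unfolding differentiable_def by metis

lemma pd_add: "f differentiable (at x) \<Longrightarrow> g differentiable (at x) \<Longrightarrow>
   pd a (\<lambda>y. f y + g y) x = pd a f x + pd a g x"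
  by (rule trans[OF pd_at[OF has_derivative_add[OF pd_has_derivative pd_has_derivative]]]) simp_all

lemma pd_diff: "f differentiable (at x) \<Longrightarrow> g differentiable (at x) \<Longrightarrow>
   pd a (\<lambda>y. f y - g y) x = pd a f x - pd a g x"
  by (rule trans[OF pd_at[OF has_derivative_diff[OF pd_has_derivative pd_has_derivative]]]) simp_all

lemma pd_mult: "f differentiable (at x) \<Longrightarrow> g differentiable (at x) \<Longrightarrow>
   pd a (\<lambda>y. f y * g y) x = pd a f x * g x + f x * pd a g x"
  by (rule trans[OF pd_at[OF has_derivative_mult[OF pd_has_derivative pd_has_derivative]]]) (simp_all add: algebra_simps)

lemma pd_cmult: "f differentiable (at x) \<Longrightarrow> pd a (\<lambda>y. c * f y) x = c * pd a f x"
  by (rule trans[OF pd_at[OF has_derivative_mult_right[OF pd_has_derivative]]]) simp_all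

lemma pd_sum: "(\<And>i. i \<in> S \<Longrightarrow> f i differentiable (at x)) \<Longrightarrow> finite S \<Longrightarrow>
   pd a (\<lambda>y. \<Sum>i\<in>S. f i y) x = (\<Sum>i\<in>S. pd a (f i) x)"
  by (rule trans[OF pd_at[OF has_derivative_sum[OF pd_has_derivative]]]) simp_all

lemma pd_const: "pd a (\<lambda>y. c) x = 0"
  by (simp add: pd_def)



lemma tangent_zero:
  fixes Om f :: "real^4 \<Rightarrow> real"
  assumes U: "open U" "x \<in> U" and cont: "continuous_on U Om" and Om0: "Om x = 0"
    and dOm: "(Om has_derivative L) (at x)" and Lv: "L v = 1" and LX: "L X = 0"
    and df: "(f has_derivative K) (at x)"
    and van: "\<And>y. y \<in> U \<Longrightarrow> Om y = 0 \<Longrightarrow> f y = 0"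
  shows "K X = 0"
proof (rule ccontr)
  assume KX: "K X \<noteq> 0"
  have linL: "linear L" using dOm has_derivative_linear by blast
  have linK: "linear K" using df has_derivative_linear by blast
  have "X \<noteq> 0" using KX linK linear_0 by blast
  define c where "c = \<bar>K X\<bar>"
  define A where "A = norm X"
  define B where "B = norm v"
  define D where "D = \<bar>K v\<bar>"
  have c0: "c > 0" using KX c_def by simp
  have A0: "A > 0" using \<open>X \<noteq> 0\<close> A_def by simp
  have B0: "B \<ge> 0" "D \<ge> 0" using B_def D_def by auto
  define \<epsilon> where "\<epsilon> = min (1/(2*(B+1))) (c/(16*A*(D+1)))"
  have e0: "\<epsilon> > 0" using c0 A0 B0 by (simp add: \<epsilon>_def)
  have eB: "\<epsilon> * B \<le> 1/2"
  proof -
    have "\<epsilon> \<le> 1/(2*(B+1))" by (simp add: \<epsilon>_def)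
    then have "\<epsilon> * B \<le> B/(2*(B+1))" using B0 by (metis mult_right_mono times_divide_eq_right mult.commute mult_1)
    also have "\<dots> \<le> 1/2" using B0 by (simp add: field_simps)
    finally show ?thesis .
  qed
  define \<kappa> where "\<kappa> = 4*\<epsilon>*A"
  have k0: "\<kappa> > 0" using e0 A0 by (simp add: \<kappa>_def)
  have kB: "\<kappa> * B \<le> 2 * A"
  proof -
    have "\<kappa> * B = 4 * A * (\<epsilon> * B)" by (simp add: \<kappa>_def)
    also have "\<dots> \<le> 4 * A * (1/2)" using eB A0 by (intro mult_left_mono) auto
    finally show ?thesis by simp
  qed
  have kD: "\<kappa> * D \<le> c/4"
  proof -
    have pos: "16*A*(D+1) > 0" using A0 B0 by simp
    have "\<epsilon> \<le> c/(16*A*(D+1))" by (simp add: \<epsilon>_def)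
    then have m: "\<epsilon> * (16*A*(D+1)) \<le> c" using pos by (simp add: pos_le_divide_eq)
    have "\<kappa> * D = (4*\<epsilon>*A) * D" by (simp add: \<kappa>_def)
    also have "\<dots> \<le> (4*\<epsilon>*A) * (D+1)" using e0 A0 by (intro mult_left_mono) auto
    also have "\<dots> = (\<epsilon> * (16*A*(D+1)))/4" by (simp add: algebra_simps)
    also have "\<dots> \<le> c/4" using m by (intro divide_right_mono) auto
    finally show ?thesis .
  qed
  define S where "S = A + \<kappa>*B + 1"
  have kB0: "\<kappa>*B \<ge> 0" using k0 B0 by simp
  have S0: "S > 0" "A + \<kappa>*B \<le> S" using A0 kB0 by (auto simp: S_def)
  define \<epsilon>' where "\<epsilon>' = c/(4*S)"
  have e'0: "\<epsilon>' > 0" using c0 S0 by (simp add: \<epsilon>'_def)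
  have e'S: "\<epsilon>' * S = c/4" using S0 by (simp add: \<epsilon>'_def)
  have e'b: "\<epsilon>' * (A + \<kappa>*B) \<le> c/4"
    using mult_left_mono[OF S0(2), of \<epsilon>'] e'0 e'S by simp
  obtain d1 where d1: "d1 > 0" "\<And>y. norm (y - x) < d1 \<Longrightarrow> norm (Om y - Om x - L (y - x)) \<le> \<epsilon> * norm (y - x)"
    using dOm e0 unfolding has_derivative_at_alt by blast
  obtain d2 where d2: "d2 > 0" "\<And>y. norm (y - x) < d2 \<Longrightarrow> norm (f y - f x - K (y - x)) \<le> \<epsilon>' * norm (y - x)"
    using df e'0 unfolding has_derivative_at_alt by blast
  obtain d3 where d3: "d3 > 0" "ball x d3 \<subseteq> U" using U open_contains_ball by blast
  define d where "d = min d1 (min d2 d3)"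
  have d0: "d > 0" using d1 d2 d3 by (simp add: d_def)
  define t where "t = d / (2*S)"
  have t0: "t > 0" using d0 S0 by (simp add: t_def)
  have tS: "t * S = d/2" using S0 by (simp add: t_def)
  have td: "t * (A + \<kappa>*B) < d"
    using mult_left_mono[OF S0(2), of t] t0 tS d0 by simp
  define y where "y = (\<lambda>s::real. x + t *\<^sub>R X + s *\<^sub>R v)"
  have ny: "norm (y s - x) \<le> t * (A + \<kappa>*B)" if "\<bar>s\<bar> \<le> \<kappa> * t" for s
  proof -
    have "norm (y s - x) = norm (t *\<^sub>R X + s *\<^sub>R v)" by (simp add: y_def)
    also have "\<dots> \<le> t * A + \<bar>s\<bar> * B" using t0 by (metis A_def B_def norm_scaleR norm_triangle_ineq abs_of_pos)
    also have "\<dots> \<le> t * A + (\<kappa> * t) * B" using that B0 by (intro add_left_mono mult_right_mono) auto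
    finally show ?thesis by (simp add: algebra_simps)
  qed
  have yU: "y s \<in> U" and yd1: "norm (y s - x) < d1" and yd2: "norm (y s - x) < d2"
    if "\<bar>s\<bar> \<le> \<kappa> * t" for s
  proof -
    have "norm (y s - x) < d" using ny[OF that] td by linarith
    then show "y s \<in> U" "norm (y s - x) < d1" "norm (y s - x) < d2"
      using d3 by (auto simp: d_def dist_norm norm_minus_commute subset_iff)
  qed
  have Ly: "L (y s - x) = s" for s
    using linL Lv LX by (simp add: y_def linear_add linear_scale)
  have Omy: "\<bar>Om (y s) - s\<bar> \<le> \<epsilon> * (t * (A + \<kappa>*B))" if "\<bar>s\<bar> \<le> \<kappa> * t" for s
  proof -
    have "\<bar>Om (y s) - s\<bar> \<le> \<epsilon> * norm (y s - x)" using d1(2)[OF yd1[OF that]] Ly Om0 by simp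
    also have "\<dots> \<le> \<epsilon> * (t * (A + \<kappa>*B))" using ny[OF that] e0 by (intro mult_left_mono) auto
    finally show ?thesis .
  qed
  have small: "\<epsilon> * (t * (A + \<kappa>*B)) < \<kappa> * t"
  proof -
    have q: "\<epsilon> * (\<kappa>*B) \<le> \<epsilon> * (2*A)" using kB e0 by (intro mult_left_mono) auto
    have q2: "\<epsilon> * A + \<epsilon> * (\<kappa>*B) \<le> 3 * \<epsilon> * A" using q by (simp add: algebra_simps)
    have "\<epsilon> * (t * (A + \<kappa>*B)) = t * (\<epsilon> * A + \<epsilon> * (\<kappa>*B))" by (simp add: algebra_simps)
    also have "\<dots> \<le> t * (3 * \<epsilon> * A)" using t0 q2 by (intro mult_left_mono) auto
    also have "\<dots> < \<kappa> * t" using t0 e0 A0 by (simp add: \<kappa>_def)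
    finally show ?thesis .
  qed
  have kt: "\<bar>\<kappa> * t\<bar> \<le> \<kappa> * t" "\<bar>- (\<kappa> * t)\<bar> \<le> \<kappa> * t" using k0 t0 by auto
  have lo: "Om (y (- (\<kappa> * t))) \<le> 0" using Omy[OF kt(2)] small by linarith
  have hi: "0 \<le> Om (y (\<kappa> * t))" using Omy[OF kt(1)] small by linarith
  have cont_y: "continuous_on {- (\<kappa> * t) .. \<kappa> * t} (\<lambda>s. Om (y s))"
  proof (rule continuous_on_compose2[OF cont])
    show "continuous_on {- (\<kappa> * t)..\<kappa> * t} y" unfolding y_def by (intro continuous_intros)
    show "y ` {- (\<kappa> * t)..\<kappa> * t} \<subseteq> U" using yU by auto
  qed
  obtain s where s: "- (\<kappa> * t) \<le> s" "s \<le> \<kappa> * t" "Om (y s) = 0"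
    using IVT'[of "\<lambda>s. Om (y s)", OF lo hi _ cont_y] k0 t0 by auto
  have sabs: "\<bar>s\<bar> \<le> \<kappa> * t" using s by auto
  have fy: "f (y s) = 0" using van[OF yU[OF sabs] s(3)] .
  have fx: "f x = 0" using van[OF U(2) Om0] .
  have Ky: "K (y s - x) = t * K X + s * K v" using linK by (simp add: y_def linear_add linear_scale)
  have "\<bar>t * K X + s * K v\<bar> \<le> \<epsilon>' * norm (y s - x)" using d2(2)[OF yd2[OF sabs]] fy fx Ky by simp
  also have "\<dots> \<le> \<epsilon>' * (t * (A + \<kappa>*B))" using ny[OF sabs] e'0 by (intro mult_left_mono) auto
  also have "\<dots> \<le> t * (c/4)" using e'b t0 by (metis mult.left_commute mult_left_mono less_imp_le)
  finally have i1: "\<bar>t * K X + s * K v\<bar> \<le> t * (c/4)" .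
  have i2: "\<bar>s * K v\<bar> \<le> t * (c/4)"
  proof -
    have "\<bar>s * K v\<bar> = \<bar>s\<bar> * D" by (simp add: D_def abs_mult)
    also have "\<dots> \<le> (\<kappa> * t) * D" using sabs B0 by (intro mult_right_mono) auto
    also have "\<dots> \<le> t * (c/4)" using kD t0 by (metis mult.commute mult.left_commute mult_left_mono less_imp_le)
    finally show ?thesis .
  qed
  have "\<bar>t * K X\<bar> = t * c" using t0 by (simp add: c_def abs_mult)
  then have "t * c \<le> t * (c/2)" using i1 i2 by linarith
  then show False using t0 c0 by simp
qed



lemma line_deriv:
  fixes f :: "real^4 \<Rightarrow> real"
  assumes "f differentiable (at (p + t *\<^sub>R axis a 1))"
  shows "((\<lambda>s. f (p + s *\<^sub>R axis a 1)) has_real_derivative pd a f (p + t *\<^sub>R axis a 1)) (at t)"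
proof -
  have d1: "((\<lambda>s. p + s *\<^sub>R axis a (1::real)) has_derivative (\<lambda>s. s *\<^sub>R axis a 1)) (at t)"
    by (auto intro!: derivative_eq_intros)
  note d2 = pd_has_derivative[OF assms]
  have "((\<lambda>s. f (p + s *\<^sub>R axis a 1)) has_derivative
      (\<lambda>h. \<Sum>c\<in>UNIV. h $ c * pd c f (p + t *\<^sub>R axis a 1)) \<circ> (\<lambda>s. s *\<^sub>R axis a 1)) (at t)"
    using diff_chain_at[OF d1 d2] by (simp add: o_def)
  moreover have "(\<lambda>h. \<Sum>c\<in>UNIV. h $ c * pd c f (p + t *\<^sub>R axis a 1)) \<circ> (\<lambda>s. s *\<^sub>R axis a 1)
      = (\<lambda>s. s * pd a f (p + t *\<^sub>R axis a 1))"
  proof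
    fix s
    have "(\<Sum>c\<in>UNIV. (s *\<^sub>R axis a (1::real)) $ c * pd c f (p + t *\<^sub>R axis a 1))
        = (\<Sum>c\<in>UNIV. s * (axis a (1::real) $ c * pd c f (p + t *\<^sub>R axis a 1)))"
      by (simp add: mult.assoc)
    also have "\<dots> = s * (\<Sum>c\<in>UNIV. axis a (1::real) $ c * pd c f (p + t *\<^sub>R axis a 1))"
      by (rule sum_distrib_left[symmetric])
    also have "\<dots> = s * pd a f (p + t *\<^sub>R axis a 1)" by (simp only: sum_axis1)
    finally show "((\<lambda>h. \<Sum>c\<in>UNIV. h $ c * pd c f (p + t *\<^sub>R axis a 1)) \<circ> (\<lambda>s. s *\<^sub>R axis a 1)) s
      = s * pd a f (p + t *\<^sub>R axis a 1)" by simp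
  qed
  moreover have "(\<lambda>s. s * pd a f (p + t *\<^sub>R axis a 1)) = (*) (pd a f (p + t *\<^sub>R axis a 1))"
    by (auto simp: mult.commute)
  ultimately show ?thesis unfolding has_field_derivative_def by metis
qed

lemma schwarz_approx:
  fixes f :: "real^4 \<Rightarrow> real"
  assumes U: "open U" "x \<in> U" and fd: "\<And>y. y \<in> U \<Longrightarrow> f differentiable (at y)"
    and gd: "(pd a f) differentiable (at x)" and e: "\<epsilon> > 0"
  shows "\<exists>\<delta>>0. \<forall>h. 0 < h \<and> h < \<delta> \<longrightarrow>
    \<bar>(f (x + h *\<^sub>R axis b 1 + h *\<^sub>R axis a 1) - f (x + h *\<^sub>R axis a 1) - f (x + h *\<^sub>R axis b 1) + f x)
      - h^2 * pd b (pd a f) x\<bar> \<le> \<epsilon> * h^2"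
proof -
  define g where "g = pd a f"
  define Q where "Q c = pd c g x" for c
  note gD = pd_has_derivative[OF gd[folded g_def]]
  have e3: "\<epsilon>/3 > 0" using e by simp
  have "\<forall>e>0. \<exists>d>0. \<forall>y. norm (y - x) < d \<longrightarrow>
      norm (g y - g x - (\<Sum>c\<in>UNIV. (y - x) $ c * pd c g x)) \<le> e * norm (y - x)"
    using gD unfolding has_derivative_at_alt by blast
  then obtain d1 where d1: "d1 > 0" "\<And>y. norm (y - x) < d1 \<Longrightarrow>
      norm (g y - g x - (\<Sum>c\<in>UNIV. (y - x) $ c * pd c g x)) \<le> (\<epsilon>/3) * norm (y - x)"
    using e3 by blast
  obtain d2 where d2: "d2 > 0" "ball x d2 \<subseteq> U" using U open_contains_ball by blast
  define \<delta> where "\<delta> = min d1 d2 / 2"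
  have "\<delta> > 0" using d1 d2 by (simp add: \<delta>_def)
  moreover have "\<bar>(f (x + h *\<^sub>R axis b 1 + h *\<^sub>R axis a 1) - f (x + h *\<^sub>R axis a 1) - f (x + h *\<^sub>R axis b 1) + f x)
      - h^2 * pd b (pd a f) x\<bar> \<le> \<epsilon> * h^2" if h: "0 < h" "h < \<delta>" for h
  proof -
    have inU: "x + w + t *\<^sub>R axis a 1 \<in> U" and ind1: "norm (w + t *\<^sub>R axis a 1) < d1"
      if "w = 0 \<or> w = h *\<^sub>R axis b 1" "0 \<le> t" "t \<le> h" for w t
    proof -
      have "norm w \<le> h" using that h by auto
      moreover have "norm (w + t *\<^sub>R axis a 1) \<le> norm w + norm (t *\<^sub>R axis a (1::real))"
        by (rule norm_triangle_ineq)
      moreover have "norm (t *\<^sub>R axis a (1::real)) = t" using that by simp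
      ultimately have "norm (w + t *\<^sub>R axis a 1) \<le> h + t" by linarith
      then have n: "norm (w + t *\<^sub>R axis a 1) < min d1 d2" using that h by (simp add: \<delta>_def)
      then have "x + (w + t *\<^sub>R axis a 1) \<in> ball x d2" 
        using norm_minus_cancel[of "w + t *\<^sub>R axis a 1"] by (simp add: dist_norm)
      then show "x + w + t *\<^sub>R axis a 1 \<in> U" using d2(2) by (auto simp: add.assoc)
      show "norm (w + t *\<^sub>R axis a 1) < d1" using n by simp
    qed
    define \<phi> where "\<phi> t = f (x + h *\<^sub>R axis b 1 + t *\<^sub>R axis a 1) - f (x + 0 + t *\<^sub>R axis a 1)" for t
    define \<phi>' where "\<phi>' t = g (x + h *\<^sub>R axis b 1 + t *\<^sub>R axis a 1) - g (x + 0 + t *\<^sub>R axis a 1)" for t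
    have "DERIV \<phi> t :> \<phi>' t" if "0 \<le> t" "t \<le> h" for t
      unfolding \<phi>_def \<phi>'_def g_def
      by (intro DERIV_diff line_deriv fd inU) (use that in auto)
    then obtain z where z: "0 < z" "z < h" "\<phi> h - \<phi> 0 = (h - 0) * \<phi>' z"
      using MVT2[of 0 h \<phi> \<phi>'] h by auto
    have Dphi: "f (x + h *\<^sub>R axis b 1 + h *\<^sub>R axis a 1) - f (x + h *\<^sub>R axis a 1) - f (x + h *\<^sub>R axis b 1) + f x
        = h * \<phi>' z" using z(3) by (simp add: \<phi>_def)
    have r1: "\<bar>g (x + h *\<^sub>R axis b 1 + z *\<^sub>R axis a 1) - g x - (h * Q b + z * Q a)\<bar> \<le> 2 * ((\<epsilon>/3) * h)"
    proof -
      have w: "h *\<^sub>R axis b 1 = 0 \<or> h *\<^sub>R axis b 1 = h *\<^sub>R axis b (1::real)" by simp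
      have "norm (h *\<^sub>R axis b 1 + z *\<^sub>R axis a (1::real)) \<le> norm (h *\<^sub>R axis b (1::real)) + norm (z *\<^sub>R axis a (1::real))"
        by (rule norm_triangle_ineq)
      moreover have "norm (h *\<^sub>R axis b (1::real)) = h" "norm (z *\<^sub>R axis a (1::real)) = z" using h z by auto
      ultimately have nn: "norm (h *\<^sub>R axis b 1 + z *\<^sub>R axis a (1::real)) \<le> 2 * h" using z by linarith
      have sm: "(\<Sum>c\<in>UNIV. (h *\<^sub>R axis b 1 + z *\<^sub>R axis a 1) $ c * pd c g x) = h * Q b + z * Q a"
        by (simp add: Q_def algebra_simps sum.distrib mult.assoc sum_distrib_left[symmetric])
      have yx: "(x + h *\<^sub>R axis b 1 + z *\<^sub>R axis a 1) - x = h *\<^sub>R axis b 1 + z *\<^sub>R axis a (1::real)"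
        by (simp add: algebra_simps)
      have "norm (g (x + h *\<^sub>R axis b 1 + z *\<^sub>R axis a 1) - g x - (h * Q b + z * Q a))
          \<le> (\<epsilon>/3) * norm (h *\<^sub>R axis b 1 + z *\<^sub>R axis a (1::real))"
        using d1(2)[of "x + h *\<^sub>R axis b 1 + z *\<^sub>R axis a 1"] ind1[OF w, of z] z yx sm by simp
      also have "\<dots> \<le> (\<epsilon>/3) * (2 * h)" using nn e3 by (intro mult_left_mono) auto
      finally show ?thesis by simp
    qed
    have r2: "\<bar>g (x + z *\<^sub>R axis a 1) - g x - z * Q a\<bar> \<le> (\<epsilon>/3) * h"
    proof -
      have sm: "(\<Sum>c\<in>UNIV. (z *\<^sub>R axis a 1) $ c * pd c g x) = z * Q a"
        by (simp add: Q_def mult.assoc sum_distrib_left[symmetric])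
      have nn: "norm (z *\<^sub>R axis a (1::real)) \<le> h" using z by simp
      have w: "(0::real^4) = 0 \<or> (0::real^4) = h *\<^sub>R axis b 1" by simp
      have "norm (g (x + z *\<^sub>R axis a 1) - g x - z * Q a) \<le> (\<epsilon>/3) * norm (z *\<^sub>R axis a (1::real))"
        using d1(2)[of "x + z *\<^sub>R axis a 1"] ind1[OF w, of z] z sm by simp
      also have "\<dots> \<le> (\<epsilon>/3) * h" using nn e3 by (intro mult_left_mono) auto
      finally show ?thesis by simp
    qed
    have "\<bar>\<phi>' z - h * Q b\<bar> \<le> 3 * ((\<epsilon>/3) * h)" using r1 r2 unfolding \<phi>'_def add_0_right by linarith
    then have "\<bar>\<phi>' z - h * Q b\<bar> \<le> \<epsilon> * h" by simp
    then have "h * \<bar>\<phi>' z - h * Q b\<bar> \<le> h * (\<epsilon> * h)" using h by (intro mult_left_mono) auto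
    moreover have "(f (x + h *\<^sub>R axis b 1 + h *\<^sub>R axis a 1) - f (x + h *\<^sub>R axis a 1) - f (x + h *\<^sub>R axis b 1) + f x)
      - h^2 * pd b (pd a f) x = h * (\<phi>' z - h * Q b)"
      using Dphi by (simp add: Q_def g_def power2_eq_square algebra_simps)
    moreover have "\<bar>h * (\<phi>' z - h * Q b)\<bar> = h * \<bar>\<phi>' z - h * Q b\<bar>" using h by (simp add: abs_mult)
    moreover have "h * (\<epsilon> * h) = \<epsilon> * h^2" by (simp add: power2_eq_square)
    ultimately show ?thesis by metis
  qed
  ultimately show ?thesis by blast
qed

lemma schwarz:
  fixes f :: "real^4 \<Rightarrow> real"
  assumes U: "open U" "x \<in> U" and fd: "\<And>y. y \<in> U \<Longrightarrow> f differentiable (at y)"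
    and gda: "(pd a f) differentiable (at x)" and gdb: "(pd b f) differentiable (at x)"
  shows "pd b (pd a f) x = pd a (pd b f) x"
proof (rule ccontr)
  assume ne: "pd b (pd a f) x \<noteq> pd a (pd b f) x"
  define \<epsilon> where "\<epsilon> = \<bar>pd b (pd a f) x - pd a (pd b f) x\<bar> / 4"
  have e: "\<epsilon> > 0" using ne by (simp add: \<epsilon>_def)
  obtain d1 where d1: "d1 > 0" "\<forall>h. 0 < h \<and> h < d1 \<longrightarrow>
    \<bar>(f (x + h *\<^sub>R axis b 1 + h *\<^sub>R axis a 1) - f (x + h *\<^sub>R axis a 1) - f (x + h *\<^sub>R axis b 1) + f x)
      - h^2 * pd b (pd a f) x\<bar> \<le> \<epsilon> * h^2"
    using schwarz_approx[OF U fd gda e] by blast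
  obtain d2 where d2: "d2 > 0" "\<forall>h. 0 < h \<and> h < d2 \<longrightarrow>
    \<bar>(f (x + h *\<^sub>R axis a 1 + h *\<^sub>R axis b 1) - f (x + h *\<^sub>R axis b 1) - f (x + h *\<^sub>R axis a 1) + f x)
      - h^2 * pd a (pd b f) x\<bar> \<le> \<epsilon> * h^2"
    using schwarz_approx[OF U fd gdb e] by blast
  define h where "h = min d1 d2 / 2"
  have h: "0 < h" "h < d1" "h < d2" using d1 d2 by (auto simp: h_def)
  have sw: "x + h *\<^sub>R axis a 1 + h *\<^sub>R axis b 1 = x + h *\<^sub>R axis b 1 + h *\<^sub>R axis a (1::real)"
    by (simp add: ac_simps)
  note i1 = d1(2)[rule_format, OF conjI[OF h(1) h(2)]]
  note i2 = d2(2)[rule_format, OF conjI[OF h(1) h(3)]]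
  have "\<bar>h^2 * pd b (pd a f) x - h^2 * pd a (pd b f) x\<bar> \<le> 2 * \<epsilon> * h^2"
    using i1 i2[unfolded sw] by linarith
  then have "h^2 * \<bar>pd b (pd a f) x - pd a (pd b f) x\<bar> \<le> 2 * \<epsilon> * h^2"
    by (simp add: abs_mult right_diff_distrib[symmetric])
  then have "h^2 * (4 * \<epsilon>) \<le> h^2 * (2 * \<epsilon>)" by (simp add: \<epsilon>_def mult.commute)
  then show False using h e by simp
qed



lemma sum_eta1: "(\<Sum>K\<in>UNIV. eta I K * f K) = eta I I * f I"
proof -
  have "(\<Sum>K\<in>UNIV. eta I K * f K) = (\<Sum>K\<in>UNIV. if K = I then eta I I * f I else 0)"
    by (rule sum.cong) (auto simp: eta_def)
  then show ?thesis by simp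
qed

lemma sum_eta2: "(\<Sum>K\<in>UNIV. f K * eta K I) = f I * eta I I"
proof -
  have "(\<Sum>K\<in>UNIV. f K * eta K I) = (\<Sum>K\<in>UNIV. if K = I then f I * eta I I else 0)"
    by (rule sum.cong) (auto simp: eta_def)
  then show ?thesis by simp
qed

lemma eta_sq: "eta I I * eta I I = 1"
  by (simp add: eta_def)

lemma eta_vals[simp]: "eta 0 0 = -1" "eta 1 1 = 1" "eta 2 2 = 1" "eta 3 3 = 1"
  "eta 0 1 = 0" "eta 1 0 = 0" "eta 2 0 = 0" "eta 2 1 = 0" "eta 3 0 = 0" "eta 3 1 = 0"
  by (simp_all add: eta_def)

lemma inv_unique:
  fixes A B :: "real^'n^'n"
  assumes "B ** A = mat 1"
  shows "matrix_inv A = B"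
proof -
  have AB: "A ** B = mat 1" using assms matrix_left_right_inverse by blast
  have "invertible A" using assms AB invertible_def by blast
  then have "A ** matrix_inv A = mat 1 \<and> matrix_inv A ** A = mat 1"
    unfolding invertible_def matrix_inv_def by (rule someI_ex)
  have "matrix_inv A = (B ** A) ** matrix_inv A" using assms by (simp add: matrix_mul_lid)
  also have "\<dots> = B ** (A ** matrix_inv A)" by (simp add: matrix_mul_assoc)
  also have "\<dots> = B" using \<open>A ** matrix_inv A = mat 1 \<and> _\<close> by (simp add: matrix_mul_rid)
  finally show ?thesis .
qed

definition Hm :: "real^4^4" where "Hm = (\<chi> I J. eta I J)"

lemma Hm_sq: "Hm ** Hm = mat 1"
  by (simp add: Hm_def vec_eq_iff matrix_matrix_mult_def mat_def sum_eta1) (simp add: eta_def)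

lemma tetrad_alg:
  assumes orth: "orthonormal_tetrad G e y"
  shows "\<And>J c. cotetrad e y J c = eta J J * (\<Sum>d\<in>UNIV. e J y $ d * G y $ d $ c)"
    and "\<And>a b. (\<Sum>I\<in>UNIV. e I y $ a * cotetrad e y I b) = (if a = b then 1 else 0)"
    and "\<And>a b. ginv G y a b = (\<Sum>I\<in>UNIV. eta I I * (e I y $ a * e I y $ b))"
    and "\<And>a b. (\<Sum>d\<in>UNIV. G y $ a $ d * ginv G y d b) = (if a = b then 1 else 0)"
proof -
  define M where "M = tetrad_matrix e y"
  define C where "C = Hm ** transpose M ** G y"
  have TGM: "transpose M ** G y ** M = Hm"
  proof -
    have "(transpose M ** G y ** M) $ I $ J = Hm $ I $ J" for I J
    proof -
      have "(transpose M ** G y ** M) $ I $ J = (\<Sum>b\<in>UNIV. (\<Sum>a\<in>UNIV. e I y $ a * G y $ a $ b) * e J y $ b)"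
        by (simp add: matrix_matrix_mult_def transpose_def M_def tetrad_matrix_def)
      also have "\<dots> = (\<Sum>b\<in>UNIV. \<Sum>a\<in>UNIV. G y $ a $ b * e I y $ a * e J y $ b)"
        by (simp add: sum_distrib_left sum_distrib_right mult_ac)
      also have "\<dots> = (\<Sum>a\<in>UNIV. \<Sum>b\<in>UNIV. G y $ a $ b * e I y $ a * e J y $ b)"
        by (rule sum.swap)
      also have "\<dots> = eta I J" using orth by (simp add: orthonormal_tetrad_def)
      finally show ?thesis by (simp add: Hm_def)
    qed
    then show ?thesis by (simp add: vec_eq_iff)
  qed
  have CM: "C ** M = mat 1"
  proof -
    have "C ** M = Hm ** (transpose M ** G y ** M)" by (simp add: C_def matrix_mul_assoc)
    then show ?thesis using TGM Hm_sq by simp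
  qed
  have invM: "matrix_inv M = C" using inv_unique[OF CM] .
  have cotC: "cotetrad e y I b = C $ I $ b" for I b by (simp add: cotetrad_def invM[unfolded M_def])
  have MC: "M ** C = mat 1" using CM matrix_left_right_inverse by blast
  have Gl: "(M ** Hm ** transpose M) ** G y = mat 1"
    using MC by (simp add: C_def matrix_mul_assoc)
  have invG: "matrix_inv (G y) = M ** Hm ** transpose M" using inv_unique[OF Gl] .
  have GG: "G y ** (M ** Hm ** transpose M) = mat 1" using Gl matrix_left_right_inverse by blast
  show "cotetrad e y J c = eta J J * (\<Sum>d\<in>UNIV. e J y $ d * G y $ d $ c)" for J c
  proof -
    have "cotetrad e y J c = C $ J $ c" by (simp add: cotetrad_def invM[unfolded M_def])
    also have "\<dots> = (\<Sum>d\<in>UNIV. (\<Sum>K\<in>UNIV. eta J K * e K y $ d) * G y $ d $ c)"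
      by (simp add: C_def Hm_def matrix_matrix_mult_def transpose_def M_def tetrad_matrix_def)
    also have "\<dots> = eta J J * (\<Sum>d\<in>UNIV. e J y $ d * G y $ d $ c)"
      by (simp add: sum_eta1 sum_distrib_left mult_ac)
    finally show ?thesis .
  qed
  show "(\<Sum>I\<in>UNIV. e I y $ a * cotetrad e y I b) = (if a = b then 1 else 0)" for a b
  proof -
    have "(M ** C) $ a $ b = (\<Sum>I\<in>UNIV. e I y $ a * cotetrad e y I b)"
      by (simp add: matrix_matrix_mult_def M_def tetrad_matrix_def cotC)
    then show ?thesis using MC by (simp add: mat_def)
  qed
  show ginvf: "ginv G y a b = (\<Sum>I\<in>UNIV. eta I I * (e I y $ a * e I y $ b))" for a b
  proof -
    have "ginv G y a b = (M ** Hm ** transpose M) $ a $ b" by (simp add: ginv_def invG)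
    also have "\<dots> = (\<Sum>I\<in>UNIV. (\<Sum>K\<in>UNIV. e K y $ a * eta K I) * e I y $ b)"
      by (simp add: Hm_def matrix_matrix_mult_def transpose_def M_def tetrad_matrix_def)
    also have "\<dots> = (\<Sum>I\<in>UNIV. eta I I * (e I y $ a * e I y $ b))"
      by (simp only: sum_eta2) (simp add: mult_ac)
    finally show ?thesis .
  qed
  show "(\<Sum>d\<in>UNIV. G y $ a $ d * ginv G y d b) = (if a = b then 1 else 0)" for a b
  proof -
    have "(G y ** matrix_inv (G y)) $ a $ b = (\<Sum>d\<in>UNIV. G y $ a $ d * ginv G y d b)"
      by (simp add: matrix_matrix_mult_def ginv_def)
    then show ?thesis using GG invG by (simp add: mat_def)
  qed
qed



lemma metric_compat_alg:
  fixes P :: "4 \<Rightarrow> 4 \<Rightarrow> 4 \<Rightarrow> real" and G' :: "4 \<Rightarrow> 4 \<Rightarrow> real" and N dN :: "4 \<Rightarrow> real"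
    and Gl :: "4 \<Rightarrow> 4 \<Rightarrow> real"
  assumes Gsym: "\<And>d b. G' d b = G' b d" and Psym: "\<And>c d b. P c d b = P c b d"
    and NN: "(\<Sum>b\<in>UNIV. \<Sum>d\<in>UNIV. P a d b * N d * N b + G' d b * dN d * N b + G' d b * N d * dN b) = 0"
    and Gl: "\<And>d b. Gl d b = (P a d b + P b d a - P d a b) / 2"
  shows "(\<Sum>b\<in>UNIV. N b * ((\<Sum>d\<in>UNIV. dN d * G' d b + N d * P a d b) - (\<Sum>d\<in>UNIV. N d * Gl d b))) = 0"
proof -
  define S1 where "S1 = (\<Sum>b\<in>UNIV. \<Sum>d\<in>UNIV. G' d b * dN d * N b)"
  define S1' where "S1' = (\<Sum>b\<in>UNIV. \<Sum>d\<in>UNIV. G' d b * N d * dN b)"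
  define S2 where "S2 = (\<Sum>b\<in>UNIV. \<Sum>d\<in>UNIV. P a d b * N d * N b)"
  define S3 where "S3 = (\<Sum>b\<in>UNIV. \<Sum>d\<in>UNIV. P b d a * N d * N b)"
  define S4 where "S4 = (\<Sum>b\<in>UNIV. \<Sum>d\<in>UNIV. P d a b * N d * N b)"
  have e1: "S2 + S1 + S1' = 0" using NN by (simp add: S1_def S1'_def S2_def sum.distrib)
  have e2: "S1' = S1"
  proof -
    have "S1' = (\<Sum>d\<in>UNIV. \<Sum>b\<in>UNIV. G' d b * N d * dN b)" unfolding S1'_def by (rule sum.swap)
    also have "\<dots> = S1" unfolding S1_def using Gsym by (simp add: mult_ac)
    finally show ?thesis .
  qed
  have e3: "S3 = S4"
  proof -
    have "S3 = (\<Sum>d\<in>UNIV. \<Sum>b\<in>UNIV. P b d a * N d * N b)" unfolding S3_def by (rule sum.swap)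
    also have "\<dots> = S4" unfolding S4_def using Psym by (simp add: mult_ac)
    finally show ?thesis .
  qed
  have "(\<Sum>b\<in>UNIV. N b * ((\<Sum>d\<in>UNIV. dN d * G' d b + N d * P a d b) - (\<Sum>d\<in>UNIV. N d * Gl d b)))
     = (\<Sum>b\<in>UNIV. \<Sum>d\<in>UNIV. G' d b * dN d * N b + P a d b * N d * N b
          - (P a d b * N d * N b + P b d a * N d * N b - P d a b * N d * N b) / 2)"
    by (simp add: Gl right_diff_distrib sum_distrib_left sum_subtractf[symmetric] algebra_simps)
  also have "\<dots> = S1 + S2 - (S2 + S3 - S4) / 2"
    by (simp add: S1_def S2_def S3_def S4_def sum.distrib sum_subtractf sum_divide_distrib[symmetric])
  finally show ?thesis using e1 e2 e3 by simp
qed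



lemma exp_shear_alg:
  fixes \<alpha> \<beta> :: "4 \<Rightarrow> real" and H :: "4 \<Rightarrow> 4 \<Rightarrow> real" and m :: "4 \<Rightarrow> complex"
  assumes m: "\<And>a. m a = (complex_of_real (\<alpha> a) + \<i> * complex_of_real (\<beta> a)) / 2"
    and ex: "(\<Sum>a\<in>UNIV. \<Sum>b\<in>UNIV. m a * cnj (m b) * complex_of_real (H a b)) = 0"
    and sh: "(\<Sum>a\<in>UNIV. \<Sum>b\<in>UNIV. m a * m b * complex_of_real (H a b)) = 0"
  shows "(\<Sum>a\<in>UNIV. \<Sum>b\<in>UNIV. \<alpha> a * \<alpha> b * H a b) = 0"
    "(\<Sum>a\<in>UNIV. \<Sum>b\<in>UNIV. \<beta> a * \<beta> b * H a b) = 0"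
    "(\<Sum>a\<in>UNIV. \<Sum>b\<in>UNIV. \<alpha> a * \<beta> b * H a b) = 0"
    "(\<Sum>a\<in>UNIV. \<Sum>b\<in>UNIV. \<beta> a * \<alpha> b * H a b) = 0"
proof -
  define Aaa where "Aaa = (\<Sum>a\<in>UNIV. \<Sum>b\<in>UNIV. \<alpha> a * \<alpha> b * H a b)"
  define Abb where "Abb = (\<Sum>a\<in>UNIV. \<Sum>b\<in>UNIV. \<beta> a * \<beta> b * H a b)"
  define Aab where "Aab = (\<Sum>a\<in>UNIV. \<Sum>b\<in>UNIV. \<alpha> a * \<beta> b * H a b)"
  define Aba where "Aba = (\<Sum>a\<in>UNIV. \<Sum>b\<in>UNIV. \<beta> a * \<alpha> b * H a b)"
  have r1: "Re (m a * cnj (m b) * complex_of_real (H a b)) = (\<alpha> a * \<alpha> b * H a b + \<beta> a * \<beta> b * H a b) / 4" for a b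
    by (simp add: m algebra_simps)
  have i1: "Im (m a * cnj (m b) * complex_of_real (H a b)) = (\<beta> a * \<alpha> b * H a b - \<alpha> a * \<beta> b * H a b) / 4" for a b
    by (simp add: m algebra_simps)
  have r2: "Re (m a * m b * complex_of_real (H a b)) = (\<alpha> a * \<alpha> b * H a b - \<beta> a * \<beta> b * H a b) / 4" for a b
    by (simp add: m algebra_simps)
  have i2: "Im (m a * m b * complex_of_real (H a b)) = (\<alpha> a * \<beta> b * H a b + \<beta> a * \<alpha> b * H a b) / 4" for a b
    by (simp add: m algebra_simps)
  have "Re (\<Sum>a\<in>UNIV. \<Sum>b\<in>UNIV. m a * cnj (m b) * complex_of_real (H a b)) = (Aaa + Abb) / 4"
    by (simp only: Re_sum r1) (simp add: Aaa_def Abb_def sum.distrib sum_divide_distrib[symmetric] add_divide_distrib[symmetric])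
  then have q1: "Aaa + Abb = 0" using ex by simp
  have "Im (\<Sum>a\<in>UNIV. \<Sum>b\<in>UNIV. m a * cnj (m b) * complex_of_real (H a b)) = (Aba - Aab) / 4"
    by (simp only: Im_sum i1) (simp add: Aab_def Aba_def sum_subtractf sum_divide_distrib[symmetric] diff_divide_distrib[symmetric])
  then have q2: "Aba - Aab = 0" using ex by simp
  have "Re (\<Sum>a\<in>UNIV. \<Sum>b\<in>UNIV. m a * m b * complex_of_real (H a b)) = (Aaa - Abb) / 4"
    by (simp only: Re_sum r2) (simp add: Aaa_def Abb_def sum_subtractf sum_divide_distrib[symmetric] diff_divide_distrib[symmetric])
  then have q3: "Aaa - Abb = 0" using sh by simp
  have "Im (\<Sum>a\<in>UNIV. \<Sum>b\<in>UNIV. m a * m b * complex_of_real (H a b)) = (Aab + Aba) / 4"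
    by (simp only: Im_sum i2) (simp add: Aab_def Aba_def sum.distrib sum_divide_distrib[symmetric] add_divide_distrib[symmetric])
  then have q4: "Aab + Aba = 0" using sh by simp
  show "Aaa = 0" "Abb = 0" "Aab = 0" "Aba = 0" using q1 q2 q3 q4 by linarith+
qed



lemma smooth_diff: "smooth_on U f \<Longrightarrow> y \<in> U \<Longrightarrow> f differentiable (at y)"
  unfolding smooth_on_def by (drule spec[of _ "[]"]) simp

lemma smooth_pd_diff: "smooth_on U f \<Longrightarrow> y \<in> U \<Longrightarrow> (\<lambda>z. pd a f z) differentiable (at y)"
  unfolding smooth_on_def by (drule spec[of _ "[a]"]) simp


theorem theorem1:
  fixes U :: "(real^4) set"
    and G :: "real^4 \<Rightarrow> real^4^4"
    and \<Omega> u :: "real^4 \<Rightarrow> real"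
    and e :: "4 \<Rightarrow> real^4 \<Rightarrow> real^4"
  defines "scri \<equiv> {x \<in> U. \<Omega> x = 0}"
  assumes U_open: "open U"
    and G_smooth: "\<forall>a b. smooth_on U (\<lambda>y. G y $ a $ b)"
    and G_sym: "\<forall>x\<in>U. \<forall>a b. G x $ a $ b = G x $ b $ a"
    and \<Omega>_smooth: "smooth_on U \<Omega>"
    and grad_nonzero: "\<forall>x\<in>scri. \<exists>a. pd a \<Omega> x \<noteq> 0"
    and scri_null: "\<forall>x\<in>scri. (\<Sum>a\<in>UNIV. \<Sum>b\<in>UNIV. ginv G x a b * pd a \<Omega> x * pd b \<Omega> x) = 0"
    and e_smooth: "\<forall>I a. smooth_on U (\<lambda>y. e I y $ a)"
    and e_orthonormal: "\<forall>x\<in>U. orthonormal_tetrad G e x"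
    and n_frame: "\<forall>x\<in>scri. \<forall>a. (e 0 x $ a + e 1 x $ a) / 2 = nvec G \<Omega> x a"
    and u_smooth: "smooth_on U u"
    and cuts_transverse: "\<forall>x\<in>scri. (\<Sum>a\<in>UNIV. nvec G \<Omega> x a * pd a u x) \<noteq> 0"
    and e2_tangent_cuts: "\<forall>x\<in>scri. (\<Sum>a\<in>UNIV. e 2 x $ a * pd a u x) = 0"
    and e3_tangent_cuts: "\<forall>x\<in>scri. (\<Sum>a\<in>UNIV. e 3 x $ a * pd a u x) = 0"
    and expansion_zero: "\<forall>x\<in>scri. expansion G e \<Omega> x = 0"
    and shear_zero: "\<forall>x\<in>scri. shear G e \<Omega> x = 0"
  shows "\<forall>x\<in>scri.
           pullback_eq \<Omega> x (\<lambda>a. conn_form G e x a 2 1) (\<lambda>a. conn_form G e x a 2 0)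
         \<and> pullback_eq \<Omega> x (\<lambda>a. conn_form G e x a 3 1) (\<lambda>a. conn_form G e x a 3 0)"
proof
  fix x assume xs: "x \<in> scri"
  then have xU: "x \<in> U" and Ox: "\<Omega> x = 0" by (auto simp: scri_def)
  define N where "N d y = (e 0 y $ d + e 1 y $ d) / 2" for d y
  define Nl where "Nl b y = (\<Sum>d\<in>UNIV. N d y * G y $ d $ b)" for b y
  define k where "k b y = Nl b y - pd b \<Omega> y" for b y
  define Hs where "Hs a b = cov_deriv G (grad \<Omega>) x a b" for a b
  define \<Gamma> where "\<Gamma> c a b = christoffel G x c a b" for c a b
  define Bf where "Bf X Y = (\<Sum>a\<in>UNIV. \<Sum>b\<in>UNIV. X a * Y b * Hs a b)" for X Y :: "4 \<Rightarrow> real"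
  note alg = tetrad_alg[OF e_orthonormal[rule_format]]
  have dG: "(\<lambda>y. G y $ a $ b) differentiable (at x)" for a b using smooth_diff G_smooth xU by blast
  have de: "(\<lambda>y. e I y $ a) differentiable (at x)" for I a using smooth_diff e_smooth xU by blast
  have dOm: "\<Omega> differentiable (at y)" if "y \<in> U" for y using smooth_diff \<Omega>_smooth that by blast
  have dpO: "(\<lambda>y. pd b \<Omega> y) differentiable (at x)" for b using smooth_pd_diff \<Omega>_smooth xU by blast
  have dN: "(\<lambda>y. N d y) differentiable (at x)" for d
    unfolding N_def by (intro derivative_intros de) auto
  have dNl: "(\<lambda>y. Nl b y) differentiable (at x)" for b
    unfolding Nl_def by (auto intro!: differentiable_sum differentiable_mult dN dG)
  have dk: "(\<lambda>y. k b y) differentiable (at x)" for b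
    unfolding k_def by (intro derivative_intros dNl dpO)
  have Nl_scri: "Nl b y = pd b \<Omega> y" if "y \<in> U" "\<Omega> y = 0" for b y
  proof -
    have ys: "y \<in> scri" using that by (simp add: scri_def)
    have "Nl b y = (\<Sum>d\<in>UNIV. (\<Sum>c\<in>UNIV. ginv G y d c * pd c \<Omega> y) * G y $ d $ b)"
      unfolding Nl_def N_def using n_frame ys by (simp add: nvec_def)
    also have "\<dots> = (\<Sum>c\<in>UNIV. pd c \<Omega> y * (\<Sum>d\<in>UNIV. G y $ b $ d * ginv G y d c))"
      using G_sym that(1)
      by (simp add: sum_distrib_left sum_distrib_right mult_ac) (rule sum.swap)
    also have "\<dots> = (\<Sum>c\<in>UNIV. pd c \<Omega> y * (if b = c then 1 else 0))"
      using alg(4)[OF that(1)] by simp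
    also have "\<dots> = pd b \<Omega> y" by (simp add: if_distrib cong: if_cong)
    finally show ?thesis .
  qed
  have k_van: "k b y = 0" if "y \<in> U" "\<Omega> y = 0" for b y
    using Nl_scri[OF that] by (simp add: k_def)
  have tang: "(\<Sum>a\<in>UNIV. Y $ a * pd a f x) = 0"
    if fd: "f differentiable (at x)" and fv: "\<And>y. y \<in> U \<Longrightarrow> \<Omega> y = 0 \<Longrightarrow> f y = 0"
      and Yt: "(\<Sum>a\<in>UNIV. Y $ a * pd a \<Omega> x) = 0" for f Y
  proof -
    obtain a0 where a0: "pd a0 \<Omega> x \<noteq> 0" using grad_nonzero xs by blast
    define v where "v = (1 / pd a0 \<Omega> x) *\<^sub>R axis a0 (1::real)"
    have Lv: "(\<Sum>a\<in>UNIV. v $ a * pd a \<Omega> x) = 1"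
    proof -
      have "(\<Sum>a\<in>UNIV. v $ a * pd a \<Omega> x) = (\<Sum>a\<in>UNIV. axis a0 (1::real) $ a * ((1 / pd a0 \<Omega> x) * pd a \<Omega> x))"
        unfolding v_def by (rule sum.cong) auto
      also have "\<dots> = (1 / pd a0 \<Omega> x) * pd a0 \<Omega> x" by (rule sum_axis1)
      also have "\<dots> = 1" using a0 by simp
      finally show ?thesis .
    qed
    have cont: "continuous_on U \<Omega>"
      using dOm by (intro continuous_at_imp_continuous_on ballI differentiable_imp_continuous_within) auto
    show ?thesis
      using tangent_zero[OF U_open xU cont Ox pd_has_derivative[OF dOm[OF xU]] Lv Yt pd_has_derivative[OF fd] fv]
      by simp
  qed
  have Edo: "(\<Sum>a\<in>UNIV. e I x $ a * pd a \<Omega> x) = (eta I 0 + eta I 1) / 2" for I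
  proof -
    have "(\<Sum>a\<in>UNIV. e I x $ a * pd a \<Omega> x) = (\<Sum>a\<in>UNIV. \<Sum>d\<in>UNIV. e I x $ a * (N d x * G x $ d $ a))"
      by (simp only: Nl_scri[OF xU Ox, symmetric] Nl_def sum_distrib_left)
    also have "\<dots> = ((\<Sum>a\<in>UNIV. \<Sum>d\<in>UNIV. G x $ a $ d * e I x $ a * e 0 x $ d)
                   + (\<Sum>a\<in>UNIV. \<Sum>d\<in>UNIV. G x $ a $ d * e I x $ a * e 1 x $ d)) / 2"
      using G_sym xU by (simp add: N_def sum.distrib[symmetric] sum_divide_distrib algebra_simps add_divide_distrib)
    also have "\<dots> = (eta I 0 + eta I 1) / 2"
      using e_orthonormal xU by (simp add: orthonormal_tetrad_def)
    finally show ?thesis .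
  qed
  have E2t: "(\<Sum>a\<in>UNIV. e 2 x $ a * pd a \<Omega> x) = 0" using Edo[of 2] by simp
  have E3t: "(\<Sum>a\<in>UNIV. e 3 x $ a * pd a \<Omega> x) = 0" using Edo[of 3] by simp
  define P where "P c d b = pd c (\<lambda>y. G y $ d $ b) x" for c d b
  have Psym: "P c d b = P c b d" for c d b
    unfolding P_def by (rule pd_local[OF U_open xU]) (use G_sym in auto)
  have Gsx: "G x $ d $ b = G x $ b $ d" for d b using G_sym xU by auto
  have \<Gamma>sym: "\<Gamma> c a b = \<Gamma> c b a" for c a b
  proof -
    have "pd a (\<lambda>y. G y $ d $ b) x + pd b (\<lambda>y. G y $ d $ a) x - pd d (\<lambda>y. G y $ a $ b) x
        = pd b (\<lambda>y. G y $ d $ a) x + pd a (\<lambda>y. G y $ d $ b) x - pd d (\<lambda>y. G y $ b $ a) x" for d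
      using Psym[of d a b] by (simp add: P_def)
    then show ?thesis by (simp add: \<Gamma>_def christoffel_def add.commute)
  qed
  have schw: "pd a (\<lambda>y. pd b \<Omega> y) x = pd b (\<lambda>y. pd a \<Omega> y) x" for a b
    using schwarz[OF U_open xU dOm dpO dpO, of b a] by simp
  have Hs_alt: "Hs a b = pd a (\<lambda>y. pd b \<Omega> y) x - (\<Sum>c\<in>UNIV. \<Gamma> c a b * pd c \<Omega> x)" for a b
    by (simp add: Hs_def cov_deriv_def grad_def \<Gamma>_def)
  have Hsym: "Hs a b = Hs b a" for a b
    unfolding Hs_alt using schw[of a b] \<Gamma>sym by simp
  have mv: "mvec e x a = (complex_of_real (e 2 x $ a) + \<i> * complex_of_real (e 3 x $ a)) / 2" for a
    by (simp add: mvec_def)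
  have exz: "(\<Sum>a\<in>UNIV. \<Sum>b\<in>UNIV. mvec e x a * cnj (mvec e x b) * complex_of_real (Hs a b)) = 0"
    using expansion_zero xs by (simp add: expansion_def Hs_def)
  have shz: "(\<Sum>a\<in>UNIV. \<Sum>b\<in>UNIV. mvec e x a * mvec e x b * complex_of_real (Hs a b)) = 0"
    using shear_zero xs by (simp add: shear_def Hs_def)
  note es = exp_shear_alg[of "mvec e x" "\<lambda>a. e 2 x $ a" "\<lambda>a. e 3 x $ a", OF mv exz shz]
  have Bij: "Bf (\<lambda>a. e i x $ a) (\<lambda>b. e j x $ b) = 0" if "i = 2 \<or> i = 3" "j = 2 \<or> j = 3" for i j
    using that es by (auto simp: Bf_def)
  define NNf where "NNf y = (\<Sum>b\<in>UNIV. \<Sum>d\<in>UNIV. G y $ d $ b * N d y * N b y)" for y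
  have NN0: "NNf y = 0" if "y \<in> U" for y
  proof -
    have t: "G y $ d $ b * N d y * N b y = (1/4) * (G y $ d $ b * e 0 y $ d * e 0 y $ b + G y $ d $ b * e 0 y $ d * e 1 y $ b
       + G y $ d $ b * e 1 y $ d * e 0 y $ b + G y $ d $ b * e 1 y $ d * e 1 y $ b)" for d b
      by (simp add: N_def field_simps)
    have "NNf y = (\<Sum>d\<in>UNIV. \<Sum>b\<in>UNIV. G y $ d $ b * N d y * N b y)" unfolding NNf_def by (rule sum.swap)
    also have "\<dots> = (1/4) * ((\<Sum>d\<in>UNIV. \<Sum>b\<in>UNIV. G y $ d $ b * e 0 y $ d * e 0 y $ b)
        + (\<Sum>d\<in>UNIV. \<Sum>b\<in>UNIV. G y $ d $ b * e 0 y $ d * e 1 y $ b)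
        + (\<Sum>d\<in>UNIV. \<Sum>b\<in>UNIV. G y $ d $ b * e 1 y $ d * e 0 y $ b)
        + (\<Sum>d\<in>UNIV. \<Sum>b\<in>UNIV. G y $ d $ b * e 1 y $ d * e 1 y $ b))"
      by (simp only: t sum.distrib sum_distrib_left[symmetric])
    also have "\<dots> = (1/4) * (eta 0 0 + eta 0 1 + eta 1 0 + eta 1 1)"
      using e_orthonormal that by (simp only: orthonormal_tetrad_def)
    also have "\<dots> = 0" by simp
    finally show ?thesis .
  qed
  have dGN: "(\<lambda>y. G y $ d $ b * N d y) differentiable (at x)" for d b
    by (intro differentiable_mult dG dN)
  have pdNN: "pd a NNf x = (\<Sum>b\<in>UNIV. \<Sum>d\<in>UNIV. P a d b * N d x * N b x + G x $ d $ b * pd a (\<lambda>y. N d y) x * N b x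
       + G x $ d $ b * N d x * pd a (\<lambda>y. N b y) x)" for a
  proof -
    have "pd a NNf x = (\<Sum>b\<in>UNIV. pd a (\<lambda>y. \<Sum>d\<in>UNIV. G y $ d $ b * N d y * N b y) x)"
      unfolding NNf_def by (rule pd_sum) (auto intro!: differentiable_sum differentiable_mult dG dN)
    also have "\<dots> = (\<Sum>b\<in>UNIV. \<Sum>d\<in>UNIV. pd a (\<lambda>y. G y $ d $ b * N d y * N b y) x)"
      by (intro sum.cong refl pd_sum) (auto intro!: differentiable_mult dG dN)
    also have "\<dots> = (\<Sum>b\<in>UNIV. \<Sum>d\<in>UNIV. P a d b * N d x * N b x + G x $ d $ b * pd a (\<lambda>y. N d y) x * N b x
       + G x $ d $ b * N d x * pd a (\<lambda>y. N b y) x)"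
      by (intro sum.cong refl) (simp only: pd_mult[OF dGN dN] pd_mult[OF dG dN] P_def, simp add: algebra_simps)
    finally show ?thesis .
  qed
  have pdNN0: "pd a NNf x = 0" for a
  proof -
    have "pd a NNf x = pd a (\<lambda>y. 0) x" by (rule pd_local[OF U_open xU]) (use NN0 in auto)
    then show ?thesis by (simp add: pd_const)
  qed
  have pdNl: "pd a (\<lambda>y. Nl b y) x = (\<Sum>d\<in>UNIV. pd a (\<lambda>y. N d y) x * G x $ d $ b + N d x * P a d b)" for a b
  proof -
    have "pd a (\<lambda>y. Nl b y) x = (\<Sum>d\<in>UNIV. pd a (\<lambda>y. N d y * G y $ d $ b) x)"
      unfolding Nl_def by (rule pd_sum) (auto intro!: differentiable_mult dG dN)
    also have "\<dots> = (\<Sum>d\<in>UNIV. pd a (\<lambda>y. N d y) x * G x $ d $ b + N d x * P a d b)"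
      by (intro sum.cong refl) (simp add: pd_mult[OF dN dG] P_def)
    finally show ?thesis .
  qed
  have Glf: "(\<Sum>c\<in>UNIV. G x $ d $ c * \<Gamma> c a b) = (P a d b + P b d a - P d a b) / 2" for d a b
  proof -
    have "(\<Sum>c\<in>UNIV. G x $ d $ c * \<Gamma> c a b)
        = (\<Sum>c\<in>UNIV. \<Sum>f\<in>UNIV. G x $ d $ c * ginv G x c f * ((P a f b + P b f a - P f a b) / 2))"
      by (simp add: \<Gamma>_def christoffel_def P_def sum_distrib_left sum_divide_distrib algebra_simps add_divide_distrib diff_divide_distrib)
    also have "\<dots> = (\<Sum>f\<in>UNIV. (\<Sum>c\<in>UNIV. G x $ d $ c * ginv G x c f) * ((P a f b + P b f a - P f a b) / 2))"
      by (subst sum.swap) (simp add: sum_distrib_right sum_divide_distrib)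
    also have "\<dots> = (\<Sum>f\<in>UNIV. (if d = f then 1 else 0) * ((P a f b + P b f a - P f a b) / 2))"
      using alg(4)[OF xU] by simp
    also have "\<dots> = (P a d b + P b d a - P d a b) / 2" by (rule sum_delta1)
    finally show ?thesis .
  qed
  have Gcontr: "(\<Sum>c\<in>UNIV. \<Gamma> c a b * Nl c x) = (\<Sum>d\<in>UNIV. N d x * (\<Sum>c\<in>UNIV. G x $ d $ c * \<Gamma> c a b))" for a b
    unfolding Nl_def by (simp add: sum_distrib_left sum_distrib_right mult_ac) (rule sum.swap)
  have mcompat: "(\<Sum>b\<in>UNIV. N b x * (pd a (\<lambda>y. Nl b y) x - (\<Sum>c\<in>UNIV. \<Gamma> c a b * Nl c x))) = 0" for a
  proof -
    have "(\<Sum>b\<in>UNIV. N b x * ((\<Sum>d\<in>UNIV. pd a (\<lambda>y. N d y) x * G x $ d $ b + N d x * P a d b)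
        - (\<Sum>d\<in>UNIV. N d x * (\<Sum>c\<in>UNIV. G x $ d $ c * \<Gamma> c a b)))) = 0"
      by (rule metric_compat_alg[where P=P and G'="\<lambda>d b. G x $ d $ b"])
        (use Gsx Psym pdNN[of a] pdNN0[of a] Glf in auto)
    then show ?thesis by (simp add: pdNl Gcontr)
  qed
  have pdk: "pd a (\<lambda>y. k b y) x = pd a (\<lambda>y. Nl b y) x - pd a (\<lambda>y. pd b \<Omega> y) x" for a b
    unfolding k_def by (rule pd_diff[OF dNl dpO])
  have NlO: "Nl c x = pd c \<Omega> x" for c using Nl_scri[OF xU Ox] .
  have Hk: "Hs a b = (pd a (\<lambda>y. Nl b y) x - (\<Sum>c\<in>UNIV. \<Gamma> c a b * Nl c x)) - pd a (\<lambda>y. k b y) x" for a b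
    by (simp add: Hs_alt pdk NlO)
  have BN: "Bf (\<lambda>a. N a x) (\<lambda>b. Y $ b) = 0" if Yt: "(\<Sum>a\<in>UNIV. Y $ a * pd a \<Omega> x) = 0" for Y
  proof -
    have "Bf (\<lambda>a. N a x) (\<lambda>b. Y $ b) = (\<Sum>b\<in>UNIV. \<Sum>a\<in>UNIV. N a x * Y $ b * Hs b a)"
      unfolding Bf_def by (subst sum.swap) (simp add: Hsym)
    also have "\<dots> = (\<Sum>b\<in>UNIV. Y $ b * (\<Sum>a\<in>UNIV. N a x * Hs b a))"
      by (simp add: sum_distrib_left mult_ac)
    also have "\<dots> = (\<Sum>b\<in>UNIV. Y $ b * (- (\<Sum>a\<in>UNIV. N a x * pd b (\<lambda>y. k a y) x)))"
    proof (rule sum.cong[OF refl])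
      fix b
      have "(\<Sum>a\<in>UNIV. N a x * Hs b a) = (\<Sum>a\<in>UNIV. N a x * (pd b (\<lambda>y. Nl a y) x - (\<Sum>c\<in>UNIV. \<Gamma> c b a * Nl c x)))
          - (\<Sum>a\<in>UNIV. N a x * pd b (\<lambda>y. k a y) x)"
        by (simp add: Hk right_diff_distrib sum_subtractf)
      also have "\<dots> = - (\<Sum>a\<in>UNIV. N a x * pd b (\<lambda>y. k a y) x)" using mcompat[of b] by simp
      finally show "Y $ b * (\<Sum>a\<in>UNIV. N a x * Hs b a) = Y $ b * (- (\<Sum>a\<in>UNIV. N a x * pd b (\<lambda>y. k a y) x))"
        by simp
    qed
    also have "\<dots> = - (\<Sum>a\<in>UNIV. N a x * (\<Sum>b\<in>UNIV. Y $ b * pd b (\<lambda>y. k a y) x))"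
      by (simp add: sum_distrib_left sum_negf[symmetric] mult_ac) (rule sum.swap)
    also have "\<dots> = 0" using tang[OF dk k_van Yt] by simp
    finally show ?thesis .
  qed
  have BNsplit: "Bf (\<lambda>a. N a x) Y = (Bf (\<lambda>a. e 0 x $ a) Y + Bf (\<lambda>a. e 1 x $ a) Y) / 2" for Y
  proof -
    have t: "N a x * Y b * Hs a b = (e 0 x $ a * Y b * Hs a b + e 1 x $ a * Y b * Hs a b) / 2" for a b
      by (simp add: N_def field_simps)
    show ?thesis unfolding Bf_def by (simp only: t sum.distrib sum_divide_distrib[symmetric])
  qed
  have Bdec: "Bf (\<lambda>a. X $ a) (\<lambda>b. e j x $ b) = 0"
    if Xt: "(\<Sum>a\<in>UNIV. X $ a * pd a \<Omega> x) = 0" and j: "j = 2 \<or> j = 3" for X j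
  proof -
    define c where "c J = (\<Sum>b\<in>UNIV. cotetrad e x J b * X $ b)" for J
    have Xd: "X $ a = (\<Sum>J\<in>UNIV. e J x $ a * c J)" for a
    proof -
      have "(\<Sum>J\<in>UNIV. e J x $ a * c J) = (\<Sum>b\<in>UNIV. (\<Sum>J\<in>UNIV. e J x $ a * cotetrad e x J b) * X $ b)"
        unfolding c_def by (simp add: sum_distrib_left sum_distrib_right mult_ac) (rule sum.swap)
      also have "\<dots> = (\<Sum>b\<in>UNIV. (if a = b then 1 else 0) * X $ b)" using alg(2)[OF xU] by simp
      also have "\<dots> = X $ a" by (rule sum_delta1)
      finally show ?thesis by simp
    qed
    have c01: "c 1 = c 0"
    proof -
      have "0 = (\<Sum>a\<in>UNIV. (\<Sum>J\<in>UNIV. e J x $ a * c J) * pd a \<Omega> x)" using Xt Xd by simp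
      also have "\<dots> = (\<Sum>J\<in>UNIV. c J * (\<Sum>a\<in>UNIV. e J x $ a * pd a \<Omega> x))"
        by (simp add: sum_distrib_left sum_distrib_right mult_ac) (rule sum.swap)
      also have "\<dots> = (\<Sum>J\<in>UNIV. c J * ((eta J 0 + eta J 1) / 2))" by (simp add: Edo)
      also have "\<dots> = (c 1 - c 0) / 2" by (simp add: sum4 field_simps)
      finally show ?thesis by simp
    qed
    let ?Y = "\<lambda>b. e j x $ b"
    have "Bf (\<lambda>a. X $ a) ?Y = (\<Sum>a\<in>UNIV. \<Sum>b\<in>UNIV. \<Sum>J\<in>UNIV. c J * (e J x $ a * ?Y b * Hs a b))"
      unfolding Bf_def Xd by (simp add: sum_distrib_left sum_distrib_right mult_ac)
    also have "\<dots> = (\<Sum>a\<in>UNIV. \<Sum>J\<in>UNIV. \<Sum>b\<in>UNIV. c J * (e J x $ a * ?Y b * Hs a b))"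
      by (rule sum.cong[OF refl], rule sum.swap)
    also have "\<dots> = (\<Sum>J\<in>UNIV. \<Sum>a\<in>UNIV. \<Sum>b\<in>UNIV. c J * (e J x $ a * ?Y b * Hs a b))"
      by (rule sum.swap)
    also have "\<dots> = (\<Sum>J\<in>UNIV. c J * Bf (\<lambda>a. e J x $ a) ?Y)"
      unfolding Bf_def by (simp add: sum_distrib_left)
    also have "\<dots> = c 0 * (Bf (\<lambda>a. e 0 x $ a) ?Y + Bf (\<lambda>a. e 1 x $ a) ?Y)
        + c 2 * Bf (\<lambda>a. e 2 x $ a) ?Y + c 3 * Bf (\<lambda>a. e 3 x $ a) ?Y"
      by (simp add: sum4 c01 algebra_simps)
    also have "\<dots> = c 0 * (2 * Bf (\<lambda>a. N a x) ?Y)" using Bij j by (simp add: BNsplit)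
    also have "\<dots> = 0" using BN[of "e j x"] E2t E3t j by auto
    finally show ?thesis .
  qed
  have dcot: "(\<lambda>y. cotetrad e y J b) differentiable (at x)" for J b
  proof (rule diff_local[OF U_open xU])
    show "cotetrad e y J b = eta J J * (\<Sum>d\<in>UNIV. e J y $ d * G y $ d $ b)" if "y \<in> U" for y
      using alg(1)[OF that] .
    show "(\<lambda>y. eta J J * (\<Sum>d\<in>UNIV. e J y $ d * G y $ d $ b)) differentiable (at x)"
      by (auto intro!: differentiable_mult differentiable_sum de dG)
  qed
  have cot10: "cotetrad e y 1 b - cotetrad e y 0 b = 2 * Nl b y" if "y \<in> U" for y b
  proof -
    have "cotetrad e y 1 b - cotetrad e y 0 b = (\<Sum>d\<in>UNIV. e 1 y $ d * G y $ d $ b) + (\<Sum>d\<in>UNIV. e 0 y $ d * G y $ d $ b)"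
      using alg(1)[OF that, of 1 b] alg(1)[OF that, of 0 b] by simp
    also have "\<dots> = 2 * Nl b y"
      unfolding Nl_def N_def sum.distrib[symmetric] sum_distrib_left by (rule sum.cong) (auto simp: field_simps)
    finally show ?thesis .
  qed
  have pdcot: "pd a (\<lambda>y. cotetrad e y 1 b) x - pd a (\<lambda>y. cotetrad e y 0 b) x = 2 * pd a (\<lambda>y. Nl b y) x" for a b
  proof -
    have "pd a (\<lambda>y. cotetrad e y 1 b) x - pd a (\<lambda>y. cotetrad e y 0 b) x
        = pd a (\<lambda>y. cotetrad e y 1 b - cotetrad e y 0 b) x" by (rule pd_diff[OF dcot dcot, symmetric])
    also have "\<dots> = pd a (\<lambda>y. 2 * Nl b y) x" by (rule pd_local[OF U_open xU]) (simp add: cot10)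
    also have "\<dots> = 2 * pd a (\<lambda>y. Nl b y) x" by (rule pd_cmult[OF dNl])
    finally show ?thesis .
  qed
  have covd: "cov_deriv G (\<lambda>y c. cotetrad e y 1 c) x a b - cov_deriv G (\<lambda>y c. cotetrad e y 0 c) x a b
      = 2 * (Hs a b + pd a (\<lambda>y. k b y) x)" for a b
  proof -
    have "cov_deriv G (\<lambda>y c. cotetrad e y 1 c) x a b - cov_deriv G (\<lambda>y c. cotetrad e y 0 c) x a b
       = (pd a (\<lambda>y. cotetrad e y 1 b) x - pd a (\<lambda>y. cotetrad e y 0 b) x)
         - (\<Sum>c\<in>UNIV. \<Gamma> c a b * (cotetrad e x 1 c - cotetrad e x 0 c))"
      by (simp add: cov_deriv_def \<Gamma>_def right_diff_distrib sum_subtractf)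
    also have "\<dots> = 2 * (pd a (\<lambda>y. Nl b y) x - (\<Sum>c\<in>UNIV. \<Gamma> c a b * Nl c x))"
      by (simp add: pdcot cot10[OF xU] sum_distrib_left right_diff_distrib mult_ac)
    also have "\<dots> = 2 * (Hs a b + pd a (\<lambda>y. k b y) x)" by (simp add: Hk)
    finally show ?thesis .
  qed
  have connI: "conn_form G e x a I J = eta I I * (\<Sum>b\<in>UNIV. e I x $ b * cov_deriv G (\<lambda>y c. cotetrad e y J c) x a b)" for a I J
    by (simp add: conn_form_def sum_eta1 sum_distrib_left mult_ac)
  have main: "pullback_eq \<Omega> x (\<lambda>a. conn_form G e x a I 1) (\<lambda>a. conn_form G e x a I 0)" if I: "I = 2 \<or> I = 3" for I
    unfolding pullback_eq_def tangent_scri_def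
  proof (intro allI impI)
    fix X :: "real^4" assume Xt: "(\<Sum>a\<in>UNIV. X $ a * pd a \<Omega> x) = 0"
    have eI: "eta I I = 1" using I by auto
    have "(\<Sum>a\<in>UNIV. X $ a * conn_form G e x a I 1) - (\<Sum>a\<in>UNIV. X $ a * conn_form G e x a I 0)
        = (\<Sum>a\<in>UNIV. X $ a * (\<Sum>b\<in>UNIV. e I x $ b * (cov_deriv G (\<lambda>y c. cotetrad e y 1 c) x a b
             - cov_deriv G (\<lambda>y c. cotetrad e y 0 c) x a b)))"
      by (simp add: connI eI sum_subtractf[symmetric] right_diff_distrib[symmetric])
    also have "\<dots> = (\<Sum>a\<in>UNIV. X $ a * (\<Sum>b\<in>UNIV. e I x $ b * (2 * (Hs a b + pd a (\<lambda>y. k b y) x))))"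
      by (simp only: covd)
    also have "\<dots> = 2 * Bf (\<lambda>a. X $ a) (\<lambda>b. e I x $ b)
        + 2 * (\<Sum>b\<in>UNIV. e I x $ b * (\<Sum>a\<in>UNIV. X $ a * pd a (\<lambda>y. k b y) x))"
    proof -
      have "(\<Sum>a\<in>UNIV. X $ a * (\<Sum>b\<in>UNIV. e I x $ b * (2 * (Hs a b + pd a (\<lambda>y. k b y) x))))
          = 2 * (\<Sum>a\<in>UNIV. \<Sum>b\<in>UNIV. X $ a * e I x $ b * Hs a b)
            + 2 * (\<Sum>a\<in>UNIV. \<Sum>b\<in>UNIV. e I x $ b * (X $ a * pd a (\<lambda>y. k b y) x))"
        by (simp add: sum_distrib_left sum.distrib algebra_simps)
      also have "(\<Sum>a\<in>UNIV. \<Sum>b\<in>UNIV. e I x $ b * (X $ a * pd a (\<lambda>y. k b y) x))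
          = (\<Sum>b\<in>UNIV. e I x $ b * (\<Sum>a\<in>UNIV. X $ a * pd a (\<lambda>y. k b y) x))"
        by (subst sum.swap) (simp add: sum_distrib_left)
      finally show ?thesis by (simp add: Bf_def)
    qed
    also have "\<dots> = 0" using Bdec[OF Xt I] tang[OF dk k_van Xt] by simp
    finally show "(\<Sum>a\<in>UNIV. X $ a * conn_form G e x a I 1) = (\<Sum>a\<in>UNIV. X $ a * conn_form G e x a I 0)"
      by simp
  qed
  show "pullback_eq \<Omega> x (\<lambda>a. conn_form G e x a 2 1) (\<lambda>a. conn_form G e x a 2 0)
         \<and> pullback_eq \<Omega> x (\<lambda>a. conn_form G e x a 3 1) (\<lambda>a. conn_form G e x a 3 0)"
    using main by auto
qed

end
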